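(* Let $\mathcal K$ be a finitely complete 2-category with a good yoneda structure. Let $A$ be an admissible object, $f:A\to B$ an admissible 1-cell, $g:B\to\mathcal PA$ a 1-cell, and $\phi:y_A\Rightarrow gf$ a 2-cell. If $\phi$ exhibits $g$ as a left extension of $y_A$ along $f$, then this left extension is pointwise and $\phi$ exhibits $f$ as an absolute left lifting of $y_A$ along $g$.
   Context: For $f:A\to B$, $g:C\to B$ the lax pullback $f/g$ has projections $p:f/g\to A$, $q:f/g\to C$ and universal 2-cell $\lambda:fp\Rightarrow gq$. Given $f:A\to C$, $g:A\to B$, $h:B\to C$, a 2-cell $\phi:f\Rightarrow hg$ exhibits $h$ as a left extension of $f$ along $g$ if for every $k:B\to C$, $\kappa\mapsto(\kappa g)\cdot\phi$ is a bijection from 2-cells $h\Rightarrow k$ to 2-cells $f\Rightarrow kg$; it exhibits $g$ as a left lifting of $f$ along (through) $h$ if for every $k:A\to B$, $\kappa\mapsto(h\kappa)\cdot\phi$ is a bijection from 2-cells $g\Rightarrow k$ to 2-cells $f\Rightarrow hk$; this left lifting is absolute if $\phi j$ exhibits $gj$ as a left lifting of $fj$ along $h$ for all $j:D\to A$. $\phi$ exhibits $h$ as a pointwise left extension of $f$ along $g$ if for every $c:X\to B$, with lax pullback $p:g/c\to A$, $q:g/c\to X$, $\lambda:gp\Rightarrow cq$, the 2-cell $(h\lambda)\cdot(\phi p)$ exhibits $hc$ as a left extension of $fp$ along $q$. A good yoneda structure on a finitely complete 2-category consists of: a class of admissible 1-cells such that $fg$ is admissible whenever $f$ is; an object $A$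 is admissible when $1_A$ is; for each admissible object $A$ an object $\mathcal PA$ and an admissible $y_A:A\to\mathcal PA$; for each $f:A\to B$ with $A$, $f$ admissible, a 1-cell $B(f,1):B\to\mathcal PA$ and a 2-cell $\chi^f:y_A\Rightarrow B(f,1)f$; such that (i) $\chi^f$ exhibits $f$ as an absolute left lifting of $y_A$ through $B(f,1)$; (ii) whenever $A$, $f:A\to B$ are admissible and $\phi:y_A\Rightarrow gf$ exhibits $f$ as an absolute left lifting of $y_A$ along $g$, $\phi$ exhibits $g$ as a pointwise left extension of $y_A$ along $f$. *)

theory Defs
  imports Main
begin

text \<open>A (strict) 2-category: objects, 1-cells with source/target, 2-cells with
  domain/codomain 1-cells; cmp g f is the composite g after f; vcmp b a is vertical
  composite (a first); hcmp b a is horizontal composite (a on the right/first).\<close>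

record ('o, 'a, 'c) twocat =
  obj  :: "'o set"
  arr  :: "'a set"
  src  :: "'a \<Rightarrow> 'o"
  tgt  :: "'a \<Rightarrow> 'o"
  cell :: "'c set"
  dom2 :: "'c \<Rightarrow> 'a"
  cod2 :: "'c \<Rightarrow> 'a"
  cmp  :: "'a \<Rightarrow> 'a \<Rightarrow> 'a"
  idn  :: "'o \<Rightarrow> 'a"
  vcmp :: "'c \<Rightarrow> 'c \<Rightarrow> 'c"
  hcmp :: "'c \<Rightarrow> 'c \<Rightarrow> 'c"
  id2  :: "'a \<Rightarrow> 'c"

definition hom :: "('o,'a,'c,'m) twocat_scheme \<Rightarrow> 'o \<Rightarrow> 'o \<Rightarrow> 'a set" where
  "hom C A B = {f \<in> arr C. src C f = A \<and> tgt C f = B}"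

definition cells :: "('o,'a,'c,'m) twocat_scheme \<Rightarrow> 'a \<Rightarrow> 'a \<Rightarrow> 'c set" where
  "cells C f g = {\<alpha> \<in> cell C. dom2 C \<alpha> = f \<and> cod2 C \<alpha> = g}"

text \<open>Whiskering: wr C a j is "a j", wl C h a is "h a".\<close>
definition wr :: "('o,'a,'c,'m) twocat_scheme \<Rightarrow> 'c \<Rightarrow> 'a \<Rightarrow> 'c" where
  "wr C \<alpha> j = hcmp C \<alpha> (id2 C j)"

definition wl :: "('o,'a,'c,'m) twocat_scheme \<Rightarrow> 'a \<Rightarrow> 'c \<Rightarrow> 'c" where
  "wl C h \<alpha> = hcmp C (id2 C h) \<alpha>"

definition two_cat :: "('o,'a,'c,'m) twocat_scheme \<Rightarrow> bool" where
  "two_cat C \<longleftrightarrow>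
    (\<forall>f\<in>arr C. src C f \<in> obj C \<and> tgt C f \<in> obj C) \<and>
    (\<forall>A\<in>obj C. idn C A \<in> hom C A A) \<and>
    (\<forall>f\<in>arr C. \<forall>g\<in>arr C. tgt C f = src C g \<longrightarrow> cmp C g f \<in> hom C (src C f) (tgt C g)) \<and>
    (\<forall>f\<in>arr C. \<forall>g\<in>arr C. \<forall>h\<in>arr C. tgt C f = src C g \<longrightarrow> tgt C g = src C h \<longrightarrow>
        cmp C h (cmp C g f) = cmp C (cmp C h g) f) \<and>
    (\<forall>f\<in>arr C. cmp C f (idn C (src C f)) = f \<and> cmp C (idn C (tgt C f)) f = f) \<and>
    (\<forall>\<alpha>\<in>cell C. dom2 C \<alpha> \<in> arr C \<and> cod2 C \<alpha> \<in> arr C \<and>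
        src C (dom2 C \<alpha>) = src C (cod2 C \<alpha>) \<and> tgt C (dom2 C \<alpha>) = tgt C (cod2 C \<alpha>)) \<and>
    (\<forall>f\<in>arr C. id2 C f \<in> cells C f f) \<and>
    (\<forall>\<alpha>\<in>cell C. \<forall>\<beta>\<in>cell C. cod2 C \<alpha> = dom2 C \<beta> \<longrightarrow>
        vcmp C \<beta> \<alpha> \<in> cells C (dom2 C \<alpha>) (cod2 C \<beta>)) \<and>
    (\<forall>\<alpha>\<in>cell C. \<forall>\<beta>\<in>cell C. \<forall>\<gamma>\<in>cell C. cod2 C \<alpha> = dom2 C \<beta> \<longrightarrow> cod2 C \<beta> = dom2 C \<gamma> \<longrightarrow>
        vcmp C \<gamma> (vcmp C \<beta> \<alpha>) = vcmp C (vcmp C \<gamma> \<beta>) \<alpha>) \<and>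
    (\<forall>\<alpha>\<in>cell C. vcmp C \<alpha> (id2 C (dom2 C \<alpha>)) = \<alpha> \<and> vcmp C (id2 C (cod2 C \<alpha>)) \<alpha> = \<alpha>) \<and>
    (\<forall>\<alpha>\<in>cell C. \<forall>\<beta>\<in>cell C. tgt C (dom2 C \<alpha>) = src C (dom2 C \<beta>) \<longrightarrow>
        hcmp C \<beta> \<alpha> \<in> cells C (cmp C (dom2 C \<beta>) (dom2 C \<alpha>)) (cmp C (cod2 C \<beta>) (cod2 C \<alpha>))) \<and>
    (\<forall>\<alpha>\<in>cell C. \<forall>\<beta>\<in>cell C. \<forall>\<gamma>\<in>cell C.
        tgt C (dom2 C \<alpha>) = src C (dom2 C \<beta>) \<longrightarrow> tgt C (dom2 C \<beta>) = src C (dom2 C \<gamma>) \<longrightarrow>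
        hcmp C \<gamma> (hcmp C \<beta> \<alpha>) = hcmp C (hcmp C \<gamma> \<beta>) \<alpha>) \<and>
    (\<forall>\<alpha>\<in>cell C. hcmp C (id2 C (idn C (tgt C (dom2 C \<alpha>)))) \<alpha> = \<alpha> \<and>
        hcmp C \<alpha> (id2 C (idn C (src C (dom2 C \<alpha>)))) = \<alpha>) \<and>
    (\<forall>f\<in>arr C. \<forall>g\<in>arr C. tgt C f = src C g \<longrightarrow>
        hcmp C (id2 C g) (id2 C f) = id2 C (cmp C g f)) \<and>
    (\<forall>\<alpha>\<in>cell C. \<forall>\<alpha>'\<in>cell C. \<forall>\<beta>\<in>cell C. \<forall>\<beta>'\<in>cell C.
        cod2 C \<alpha> = dom2 C \<alpha>' \<longrightarrow> cod2 C \<beta> = dom2 C \<beta>' \<longrightarrow> tgt C (dom2 C \<alpha>) = src C (dom2 C \<beta>) \<longrightarrow>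
        vcmp C (hcmp C \<beta>' \<alpha>') (hcmp C \<beta> \<alpha>) = hcmp C (vcmp C \<beta>' \<beta>) (vcmp C \<alpha>' \<alpha>))"

definition is_terminal :: "('o,'a,'c,'m) twocat_scheme \<Rightarrow> 'o \<Rightarrow> bool" where
  "is_terminal C T \<longleftrightarrow> T \<in> obj C \<and>
    (\<forall>X\<in>obj C. (\<exists>!u. u \<in> hom C X T) \<and>
       (\<forall>u\<in>hom C X T. \<forall>v\<in>hom C X T. \<exists>!\<gamma>. \<gamma> \<in> cells C u v))"

definition is_pullback :: "('o,'a,'c,'m) twocat_scheme \<Rightarrow> 'a \<Rightarrow> 'a \<Rightarrow> 'o \<Rightarrow> 'a \<Rightarrow> 'a \<Rightarrow> bool" where
  "is_pullback C f g P p q \<longleftrightarrow>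
    P \<in> obj C \<and> p \<in> hom C P (src C f) \<and> q \<in> hom C P (src C g) \<and> cmp C f p = cmp C g q \<and>
    (\<forall>X\<in>obj C. \<forall>p'\<in>hom C X (src C f). \<forall>q'\<in>hom C X (src C g). cmp C f p' = cmp C g q' \<longrightarrow>
        (\<exists>!u. u \<in> hom C X P \<and> cmp C p u = p' \<and> cmp C q u = q')) \<and>
    (\<forall>X\<in>obj C. \<forall>u\<in>hom C X P. \<forall>v\<in>hom C X P.
       \<forall>\<alpha>\<in>cells C (cmp C p u) (cmp C p v). \<forall>\<beta>\<in>cells C (cmp C q u) (cmp C q v).
        wl C f \<alpha> = wl C g \<beta> \<longrightarrow>
        (\<exists>!\<gamma>. \<gamma> \<in> cells C u v \<and> wl C p \<gamma> = \<alpha> \<and> wl C q \<gamma> = \<beta>))"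

definition is_lax_pullback :: "('o,'a,'c,'m) twocat_scheme \<Rightarrow> 'a \<Rightarrow> 'a \<Rightarrow> 'o \<Rightarrow> 'a \<Rightarrow> 'a \<Rightarrow> 'c \<Rightarrow> bool" where
  "is_lax_pullback C f g P p q lam \<longleftrightarrow>
    P \<in> obj C \<and> p \<in> hom C P (src C f) \<and> q \<in> hom C P (src C g) \<and>
    lam \<in> cells C (cmp C f p) (cmp C g q) \<and>
    (\<forall>X\<in>obj C. \<forall>p'\<in>hom C X (src C f). \<forall>q'\<in>hom C X (src C g).
       \<forall>lam'\<in>cells C (cmp C f p') (cmp C g q').
        (\<exists>!u. u \<in> hom C X P \<and> cmp C p u = p' \<and> cmp C q u = q' \<and> wr C lam u = lam')) \<and>
    (\<forall>X\<in>obj C. \<forall>u\<in>hom C X P. \<forall>v\<in>hom C X P.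
       \<forall>\<alpha>\<in>cells C (cmp C p u) (cmp C p v). \<forall>\<beta>\<in>cells C (cmp C q u) (cmp C q v).
        vcmp C (wl C g \<beta>) (wr C lam u) = vcmp C (wr C lam v) (wl C f \<alpha>) \<longrightarrow>
        (\<exists>!\<gamma>. \<gamma> \<in> cells C u v \<and> wl C p \<gamma> = \<alpha> \<and> wl C q \<gamma> = \<beta>))"

text \<open>Finitely complete 2-category: has a terminal object, pullbacks and lax pullbacks
  (comma objects); these generate all finite (weighted) 2-limits.\<close>
definition finitely_complete :: "('o,'a,'c,'m) twocat_scheme \<Rightarrow> bool" where
  "finitely_complete C \<longleftrightarrow> two_cat C \<and> (\<exists>T. is_terminal C T) \<and>
    (\<forall>f\<in>arr C. \<forall>g\<in>arr C. tgt C f = tgt C g \<longrightarrow> (\<exists>P p q. is_pullback C f g P p q)) \<and>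
    (\<forall>f\<in>arr C. \<forall>g\<in>arr C. tgt C f = tgt C g \<longrightarrow> (\<exists>P p q lam. is_lax_pullback C f g P p q lam))"

definition left_ext :: "('o,'a,'c,'m) twocat_scheme \<Rightarrow> 'a \<Rightarrow> 'a \<Rightarrow> 'a \<Rightarrow> 'c \<Rightarrow> bool" where
  "left_ext C f g h \<phi> \<longleftrightarrow>
    f \<in> arr C \<and> g \<in> arr C \<and> h \<in> arr C \<and> src C g = src C f \<and> tgt C g = src C h \<and> tgt C h = tgt C f \<and>
    \<phi> \<in> cells C f (cmp C h g) \<and>
    (\<forall>k\<in>hom C (src C h) (tgt C h).
       bij_betw (\<lambda>\<kappa>. vcmp C (wr C \<kappa> g) \<phi>) (cells C h k) (cells C f (cmp C k g)))"

definition left_lift :: "('o,'a,'c,'m) twocat_scheme \<Rightarrow> 'a \<Rightarrow> 'a \<Rightarrow> 'a \<Rightarrow> 'c \<Rightarrow> bool" where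
  "left_lift C f g h \<phi> \<longleftrightarrow>
    f \<in> arr C \<and> g \<in> arr C \<and> h \<in> arr C \<and> src C g = src C f \<and> tgt C g = src C h \<and> tgt C h = tgt C f \<and>
    \<phi> \<in> cells C f (cmp C h g) \<and>
    (\<forall>k\<in>hom C (src C g) (tgt C g).
       bij_betw (\<lambda>\<kappa>. vcmp C (wl C h \<kappa>) \<phi>) (cells C g k) (cells C f (cmp C h k)))"

definition abs_left_lift :: "('o,'a,'c,'m) twocat_scheme \<Rightarrow> 'a \<Rightarrow> 'a \<Rightarrow> 'a \<Rightarrow> 'c \<Rightarrow> bool" where
  "abs_left_lift C f g h \<phi> \<longleftrightarrow> left_lift C f g h \<phi> \<and>
    (\<forall>D\<in>obj C. \<forall>j\<in>hom C D (src C f).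
       left_lift C (cmp C f j) (cmp C g j) h (wr C \<phi> j))"

definition pointwise_left_ext :: "('o,'a,'c,'m) twocat_scheme \<Rightarrow> 'a \<Rightarrow> 'a \<Rightarrow> 'a \<Rightarrow> 'c \<Rightarrow> bool" where
  "pointwise_left_ext C f g h \<phi> \<longleftrightarrow> left_ext C f g h \<phi> \<and>
    (\<forall>X\<in>obj C. \<forall>c\<in>hom C X (tgt C g). \<forall>P p q lam. is_lax_pullback C g c P p q lam \<longrightarrow>
       left_ext C (cmp C f p) q (cmp C h c) (vcmp C (wl C h lam) (wr C \<phi> p)))"

text \<open>Data: adm (admissible 1-cells), PP (presheaf object), y (yoneda maps),
  R f = B(f,1), chi f = chi^f.\<close>
definition adm_obj :: "('o,'a,'c,'m) twocat_scheme \<Rightarrow> 'a set \<Rightarrow> 'o \<Rightarrow> bool" where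
  "adm_obj C adm A \<longleftrightarrow> A \<in> obj C \<and> idn C A \<in> adm"

definition good_yoneda ::
  "('o,'a,'c,'m) twocat_scheme \<Rightarrow> 'a set \<Rightarrow> ('o \<Rightarrow> 'o) \<Rightarrow> ('o \<Rightarrow> 'a) \<Rightarrow> ('a \<Rightarrow> 'a) \<Rightarrow> ('a \<Rightarrow> 'c) \<Rightarrow> bool" where
  "good_yoneda C adm PP y R chi \<longleftrightarrow>
    finitely_complete C \<and> adm \<subseteq> arr C \<and>
    (\<forall>f\<in>adm. \<forall>g\<in>arr C. tgt C g = src C f \<longrightarrow> cmp C f g \<in> adm) \<and>
    (\<forall>A. adm_obj C adm A \<longrightarrow> PP A \<in> obj C \<and> y A \<in> hom C A (PP A) \<and> y A \<in> adm) \<and>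
    (\<forall>f\<in>adm. adm_obj C adm (src C f) \<longrightarrow>
       R f \<in> hom C (tgt C f) (PP (src C f)) \<and>
       chi f \<in> cells C (y (src C f)) (cmp C (R f) f) \<and>
       abs_left_lift C (y (src C f)) f (R f) (chi f)) \<and>
    (\<forall>f\<in>adm. adm_obj C adm (src C f) \<longrightarrow>
       (\<forall>g \<phi>. abs_left_lift C (y (src C f)) f g \<phi> \<longrightarrow>
          pointwise_left_ext C (y (src C f)) f g \<phi>))"

end

theory Submission
  imports Defs
begin

lemma tc_cells:
  assumes "two_cat C" "\<alpha> \<in> cells C f g"
  shows "\<alpha> \<in> cell C \<and> f \<in> arr C \<and> g \<in> arr C \<and> src C f = src C g \<and> tgt C f = tgt C g"
  using assms unfolding two_cat_def cells_def by blast

lemma tc_id2: "two_cat C \<Longrightarrow> f \<in> arr C \<Longrightarrow> id2 C f \<in> cells C f f"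
  unfolding two_cat_def by blast

lemma tc_vcmp:
  assumes "two_cat C" "\<alpha> \<in> cells C f g" "\<beta> \<in> cells C g h"
  shows "vcmp C \<beta> \<alpha> \<in> cells C f h"
proof -
  have "\<forall>\<alpha>\<in>cell C. \<forall>\<beta>\<in>cell C. cod2 C \<alpha> = dom2 C \<beta> \<longrightarrow>
        vcmp C \<beta> \<alpha> \<in> cells C (dom2 C \<alpha>) (cod2 C \<beta>)" using assms(1) unfolding two_cat_def by blast
  then show ?thesis using assms(2,3) unfolding cells_def by auto
qed

lemma tc_vassoc:
  assumes "two_cat C" "\<alpha> \<in> cells C f g" "\<beta> \<in> cells C g h" "\<gamma> \<in> cells C h k"
  shows "vcmp C \<gamma> (vcmp C \<beta> \<alpha>) = vcmp C (vcmp C \<gamma> \<beta>) \<alpha>"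
proof -
  have "\<forall>\<alpha>\<in>cell C. \<forall>\<beta>\<in>cell C. \<forall>\<gamma>\<in>cell C. cod2 C \<alpha> = dom2 C \<beta> \<longrightarrow> cod2 C \<beta> = dom2 C \<gamma> \<longrightarrow>
        vcmp C \<gamma> (vcmp C \<beta> \<alpha>) = vcmp C (vcmp C \<gamma> \<beta>) \<alpha>" using assms(1) unfolding two_cat_def by blast
  then show ?thesis using assms(2-4) unfolding cells_def by auto
qed

lemma tc_vid:
  assumes "two_cat C" "\<alpha> \<in> cells C f g"
  shows "vcmp C \<alpha> (id2 C f) = \<alpha>" "vcmp C (id2 C g) \<alpha> = \<alpha>"
proof -
  have "\<forall>\<alpha>\<in>cell C. vcmp C \<alpha> (id2 C (dom2 C \<alpha>)) = \<alpha> \<and> vcmp C (id2 C (cod2 C \<alpha>)) \<alpha> = \<alpha>"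
    using assms(1) unfolding two_cat_def by blast
  then show "vcmp C \<alpha> (id2 C f) = \<alpha>" "vcmp C (id2 C g) \<alpha> = \<alpha>" using assms(2) unfolding cells_def by auto
qed

lemma tc_hcmp:
  assumes "two_cat C" "\<alpha> \<in> cells C f f'" "\<beta> \<in> cells C h h'" "tgt C f = src C h"
  shows "hcmp C \<beta> \<alpha> \<in> cells C (cmp C h f) (cmp C h' f')"
proof -
  have "\<forall>\<alpha>\<in>cell C. \<forall>\<beta>\<in>cell C. tgt C (dom2 C \<alpha>) = src C (dom2 C \<beta>) \<longrightarrow>
        hcmp C \<beta> \<alpha> \<in> cells C (cmp C (dom2 C \<beta>) (dom2 C \<alpha>)) (cmp C (cod2 C \<beta>) (cod2 C \<alpha>))"
    using assms(1) unfolding two_cat_def by blast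
  then show ?thesis using assms(2-4) unfolding cells_def by auto
qed

lemma tc_hassoc:
  assumes "two_cat C" "\<alpha> \<in> cells C f f'" "\<beta> \<in> cells C g g'" "\<gamma> \<in> cells C h h'"
    "tgt C f = src C g" "tgt C g = src C h"
  shows "hcmp C \<gamma> (hcmp C \<beta> \<alpha>) = hcmp C (hcmp C \<gamma> \<beta>) \<alpha>"
proof -
  have "\<forall>\<alpha>\<in>cell C. \<forall>\<beta>\<in>cell C. \<forall>\<gamma>\<in>cell C.
        tgt C (dom2 C \<alpha>) = src C (dom2 C \<beta>) \<longrightarrow> tgt C (dom2 C \<beta>) = src C (dom2 C \<gamma>) \<longrightarrow>
        hcmp C \<gamma> (hcmp C \<beta> \<alpha>) = hcmp C (hcmp C \<gamma> \<beta>) \<alpha>"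
    using assms(1) unfolding two_cat_def by blast
  then show ?thesis using assms(2-6) unfolding cells_def by auto
qed

lemma tc_hid:
  assumes "two_cat C" "f \<in> arr C" "g \<in> arr C" "tgt C f = src C g"
  shows "hcmp C (id2 C g) (id2 C f) = id2 C (cmp C g f)"
  using assms unfolding two_cat_def by blast

lemma tc_inter:
  assumes "two_cat C" "\<alpha> \<in> cells C f f'" "\<alpha>' \<in> cells C f' f''" "\<beta> \<in> cells C h h'" "\<beta>' \<in> cells C h' h''"
    "tgt C f = src C h"
  shows "vcmp C (hcmp C \<beta>' \<alpha>') (hcmp C \<beta> \<alpha>) = hcmp C (vcmp C \<beta>' \<beta>) (vcmp C \<alpha>' \<alpha>)"
proof -
  have "\<forall>\<alpha>\<in>cell C. \<forall>\<alpha>'\<in>cell C. \<forall>\<beta>\<in>cell C. \<forall>\<beta>'\<in>cell C.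
        cod2 C \<alpha> = dom2 C \<alpha>' \<longrightarrow> cod2 C \<beta> = dom2 C \<beta>' \<longrightarrow> tgt C (dom2 C \<alpha>) = src C (dom2 C \<beta>) \<longrightarrow>
        vcmp C (hcmp C \<beta>' \<alpha>') (hcmp C \<beta> \<alpha>) = hcmp C (vcmp C \<beta>' \<beta>) (vcmp C \<alpha>' \<alpha>)"
    using assms(1) unfolding two_cat_def by blast
  then show ?thesis using assms(2-6) unfolding cells_def by auto
qed

lemma wr_cells:
  assumes "two_cat C" "\<alpha> \<in> cells C h k" "j \<in> arr C" "tgt C j = src C h"
  shows "wr C \<alpha> j \<in> cells C (cmp C h j) (cmp C k j)"
  unfolding wr_def using tc_hcmp[OF assms(1) tc_id2[OF assms(1,3)] assms(2)] assms(4) by blast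

lemma wl_cells:
  assumes "two_cat C" "\<alpha> \<in> cells C g k" "h \<in> arr C" "tgt C g = src C h"
  shows "wl C h \<alpha> \<in> cells C (cmp C h g) (cmp C h k)"
  unfolding wl_def using tc_hcmp[OF assms(1) assms(2) tc_id2[OF assms(1,3)]] assms(4) by blast

lemma wr_vcmp:
  assumes "two_cat C" "\<alpha> \<in> cells C f g" "\<beta> \<in> cells C g h" "j \<in> arr C" "tgt C j = src C f"
  shows "wr C (vcmp C \<beta> \<alpha>) j = vcmp C (wr C \<beta> j) (wr C \<alpha> j)"
  unfolding wr_def
  using tc_inter[OF assms(1) tc_id2[OF assms(1,4)] tc_id2[OF assms(1,4)] assms(2,3) assms(5)]
    tc_vid[OF assms(1) tc_id2[OF assms(1,4)]] by simp

lemma wl_vcmp: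
  assumes "two_cat C" "\<alpha> \<in> cells C f g" "\<beta> \<in> cells C g h" "k \<in> arr C" "tgt C f = src C k"
  shows "wl C k (vcmp C \<beta> \<alpha>) = vcmp C (wl C k \<beta>) (wl C k \<alpha>)"
  unfolding wl_def
  using tc_inter[OF assms(1) assms(2,3) tc_id2[OF assms(1,4)] tc_id2[OF assms(1,4)] assms(5)]
    tc_vid[OF assms(1) tc_id2[OF assms(1,4)]] by simp

lemma wr_id2:
  assumes "two_cat C" "h \<in> arr C" "j \<in> arr C" "tgt C j = src C h"
  shows "wr C (id2 C h) j = id2 C (cmp C h j)"
  unfolding wr_def using tc_hid[OF assms(1,3,2,4)] .

lemma wr_wr:
  assumes "two_cat C" "\<alpha> \<in> cells C h k" "f \<in> arr C" "j \<in> arr C" "tgt C f = src C h" "tgt C j = src C f"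
  shows "wr C (wr C \<alpha> f) j = wr C \<alpha> (cmp C f j)"
  unfolding wr_def
  using tc_hassoc[OF assms(1) tc_id2[OF assms(1,4)] tc_id2[OF assms(1,3)] assms(2) assms(6,5)]
    tc_hid[OF assms(1,4,3,6)] by simp

lemma natural:
  assumes "two_cat C" "\<theta> \<in> cells C H H'" "\<kappa> \<in> cells C G K" "tgt C G = src C H"
  shows "vcmp C (wl C H' \<kappa>) (wr C \<theta> G) = vcmp C (wr C \<theta> K) (wl C H \<kappa>)"
proof -
  have a: "H \<in> arr C" "H' \<in> arr C" "G \<in> arr C" "K \<in> arr C" "tgt C G = src C H'" "tgt C K = tgt C G"
    using tc_cells[OF assms(1,2)] tc_cells[OF assms(1,3)] assms(4) by auto
  have "vcmp C (wl C H' \<kappa>) (wr C \<theta> G) = hcmp C (vcmp C (id2 C H') \<theta>) (vcmp C \<kappa> (id2 C G))"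
    unfolding wl_def wr_def
    by (rule tc_inter[OF assms(1) tc_id2[OF assms(1) a(3)] assms(3) assms(2) tc_id2[OF assms(1) a(2)] assms(4)])
  also have "\<dots> = hcmp C \<theta> \<kappa>" using tc_vid[OF assms(1,2)] tc_vid[OF assms(1,3)] by simp
  also have "\<dots> = hcmp C (vcmp C \<theta> (id2 C H)) (vcmp C (id2 C K) \<kappa>)"
    using tc_vid[OF assms(1,2)] tc_vid[OF assms(1,3)] by simp
  also have "\<dots> = vcmp C (wr C \<theta> K) (wl C H \<kappa>)"
    unfolding wl_def wr_def
    by (rule tc_inter[OF assms(1) assms(3) tc_id2[OF assms(1) a(4)] tc_id2[OF assms(1) a(1)] assms(2) assms(4), symmetric])
  finally show ?thesis .
qed

lemma lift_transport:
  assumes tc: "two_cat C" and L: "left_lift C F G H \<psi>"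
    and th: "\<theta> \<in> cells C H H'" and th': "\<theta>' \<in> cells C H' H"
    and inv1: "vcmp C \<theta>' \<theta> = id2 C H" and inv2: "vcmp C \<theta> \<theta>' = id2 C H'"
  shows "left_lift C F G H' (vcmp C (wr C \<theta> G) \<psi>)"
proof -
  have b: "F \<in> arr C" "G \<in> arr C" "H \<in> arr C" "src C G = src C F" "tgt C G = src C H"
    "tgt C H = tgt C F" "\<psi> \<in> cells C F (cmp C H G)"
    and bij: "\<And>k. k \<in> hom C (src C G) (tgt C G) \<Longrightarrow>
       bij_betw (\<lambda>\<kappa>. vcmp C (wl C H \<kappa>) \<psi>) (cells C G k) (cells C F (cmp C H k))"
    using L unfolding left_lift_def by auto
  have h': "H' \<in> arr C" "src C H' = src C H" "tgt C H' = tgt C H" using tc_cells[OF tc th] by auto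
  have wth: "wr C \<theta> G \<in> cells C (cmp C H G) (cmp C H' G)" using wr_cells[OF tc th b(2) b(5)] .
  have cell: "vcmp C (wr C \<theta> G) \<psi> \<in> cells C F (cmp C H' G)" using tc_vcmp[OF tc b(7) wth] .
  have "bij_betw (\<lambda>\<kappa>. vcmp C (wl C H' \<kappa>) (vcmp C (wr C \<theta> G) \<psi>)) (cells C G k) (cells C F (cmp C H' k))"
    if k: "k \<in> hom C (src C G) (tgt C G)" for k
  proof -
    have ka: "k \<in> arr C" "tgt C k = src C H" using k b(5) unfolding hom_def by auto
    have wk: "wr C \<theta> k \<in> cells C (cmp C H k) (cmp C H' k)" using wr_cells[OF tc th ka] .
    have wk': "wr C \<theta>' k \<in> cells C (cmp C H' k) (cmp C H k)" using wr_cells[OF tc th' ka(1)] ka(2) h' by simp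
    have inv1k: "vcmp C (wr C \<theta>' k) (wr C \<theta> k) = id2 C (cmp C H k)"
      using wr_vcmp[OF tc th th' ka] inv1 wr_id2[OF tc b(3) ka] by simp
    have inv2k: "vcmp C (wr C \<theta> k) (wr C \<theta>' k) = id2 C (cmp C H' k)"
      using wr_vcmp[OF tc th' th ka(1)] ka(2) h' inv2 wr_id2[OF tc h'(1) ka(1)] by simp
    have nb: "bij_betw (\<lambda>\<beta>. vcmp C (wr C \<theta> k) \<beta>) (cells C F (cmp C H k)) (cells C F (cmp C H' k))"
    proof (rule bij_betw_byWitness[where f' = "\<lambda>\<beta>. vcmp C (wr C \<theta>' k) \<beta>"])
      show "\<forall>a\<in>cells C F (cmp C H k). vcmp C (wr C \<theta>' k) (vcmp C (wr C \<theta> k) a) = a"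
        using tc_vassoc[OF tc _ wk wk'] inv1k tc_vid(2)[OF tc] by simp
      show "\<forall>a\<in>cells C F (cmp C H' k). vcmp C (wr C \<theta> k) (vcmp C (wr C \<theta>' k) a) = a"
        using tc_vassoc[OF tc _ wk' wk] inv2k tc_vid(2)[OF tc] by simp
      show "(\<lambda>\<beta>. vcmp C (wr C \<theta> k) \<beta>) ` cells C F (cmp C H k) \<subseteq> cells C F (cmp C H' k)"
        using tc_vcmp[OF tc _ wk] by blast
      show "(\<lambda>\<beta>. vcmp C (wr C \<theta>' k) \<beta>) ` cells C F (cmp C H' k) \<subseteq> cells C F (cmp C H k)"
        using tc_vcmp[OF tc _ wk'] by blast
    qed
    have comp: "bij_betw ((\<lambda>\<beta>. vcmp C (wr C \<theta> k) \<beta>) \<circ> (\<lambda>\<kappa>. vcmp C (wl C H \<kappa>) \<psi>))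
        (cells C G k) (cells C F (cmp C H' k))"
      by (rule bij_betw_trans[OF bij[OF k] nb])
    have eq: "vcmp C (wl C H' \<kappa>) (vcmp C (wr C \<theta> G) \<psi>) =
            ((\<lambda>\<beta>. vcmp C (wr C \<theta> k) \<beta>) \<circ> (\<lambda>\<kappa>. vcmp C (wl C H \<kappa>) \<psi>)) \<kappa>"
      if kk: "\<kappa> \<in> cells C G k" for \<kappa>
    proof -
        have w1: "wl C H' \<kappa> \<in> cells C (cmp C H' G) (cmp C H' k)"
          using wl_cells[OF tc kk h'(1)] b(5) h' by simp
        have w2: "wl C H \<kappa> \<in> cells C (cmp C H G) (cmp C H k)" using wl_cells[OF tc kk b(3) b(5)] .
        have "vcmp C (wl C H' \<kappa>) (vcmp C (wr C \<theta> G) \<psi>) = vcmp C (vcmp C (wl C H' \<kappa>) (wr C \<theta> G)) \<psi>"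
          using tc_vassoc[OF tc b(7) wth w1] .
        also have "\<dots> = vcmp C (vcmp C (wr C \<theta> k) (wl C H \<kappa>)) \<psi>"
          using natural[OF tc th kk b(5)] by simp
        also have "\<dots> = vcmp C (wr C \<theta> k) (vcmp C (wl C H \<kappa>) \<psi>)"
          using tc_vassoc[OF tc b(7) w2 wk] by simp
        finally show ?thesis by simp
    qed
    show ?thesis using bij_betw_cong[of "cells C G k" "\<lambda>\<kappa>. vcmp C (wl C H' \<kappa>) (vcmp C (wr C \<theta> G) \<psi>)"
       "(\<lambda>\<beta>. vcmp C (wr C \<theta> k) \<beta>) \<circ> (\<lambda>\<kappa>. vcmp C (wl C H \<kappa>) \<psi>)" "cells C F (cmp C H' k)"] eq comp
      by blast
  qed
  then show ?thesis unfolding left_lift_def using b h' cell by auto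
qed

lemma abs_transport:
  assumes tc: "two_cat C" and L: "abs_left_lift C F G H \<psi>"
    and th: "\<theta> \<in> cells C H H'" and th': "\<theta>' \<in> cells C H' H"
    and inv1: "vcmp C \<theta>' \<theta> = id2 C H" and inv2: "vcmp C \<theta> \<theta>' = id2 C H'"
  shows "abs_left_lift C F G H' (vcmp C (wr C \<theta> G) \<psi>)"
proof -
  have L0: "left_lift C F G H \<psi>" using L unfolding abs_left_lift_def by blast
  have b: "F \<in> arr C" "G \<in> arr C" "H \<in> arr C" "src C G = src C F" "tgt C G = src C H"
    "tgt C H = tgt C F" "\<psi> \<in> cells C F (cmp C H G)"
    using L0 unfolding left_lift_def by auto
  have wth: "wr C \<theta> G \<in> cells C (cmp C H G) (cmp C H' G)" using wr_cells[OF tc th b(2) b(5)] .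
  have "left_lift C (cmp C F j) (cmp C G j) H' (wr C (vcmp C (wr C \<theta> G) \<psi>) j)"
    if D: "D \<in> obj C" and j: "j \<in> hom C D (src C F)" for D j
  proof -
    have ja: "j \<in> arr C" "tgt C j = src C G" using j b(4) unfolding hom_def by auto
    have Lj: "left_lift C (cmp C F j) (cmp C G j) H (wr C \<psi> j)" using L D j unfolding abs_left_lift_def by blast
    have "wr C (vcmp C (wr C \<theta> G) \<psi>) j = vcmp C (wr C (wr C \<theta> G) j) (wr C \<psi> j)"
      using wr_vcmp[OF tc b(7) wth ja(1)] ja(2) b(4) by simp
    also have "\<dots> = vcmp C (wr C \<theta> (cmp C G j)) (wr C \<psi> j)"
      using wr_wr[OF tc th b(2) ja(1) b(5) ja(2)] by simp
    finally show ?thesis using lift_transport[OF tc Lj th th' inv1 inv2] by simp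
  qed
  then show ?thesis using lift_transport[OF tc L0 th th' inv1 inv2] unfolding abs_left_lift_def by blast
qed

theorem lemma3p2:
  fixes C :: "('o, 'a, 'c) twocat"
  assumes "finitely_complete C"
    and "good_yoneda C adm PP y R chi"
    and "adm_obj C adm A"
    and "f \<in> hom C A B" and "f \<in> adm"
    and "g \<in> hom C B (PP A)"
    and "\<phi> \<in> cells C (y A) (cmp C g f)"
    and "left_ext C (y A) f g \<phi>"
  shows "pointwise_left_ext C (y A) f g \<phi> \<and> abs_left_lift C (y A) f g \<phi>"
proof -
  have tc: "two_cat C" using assms(1) unfolding finitely_complete_def by blast
  have fa: "f \<in> arr C" "src C f = A" "tgt C f = B" using assms(4) unfolding hom_def by auto
  have ga: "g \<in> arr C" "src C g = B" "tgt C g = PP A" using assms(6) unfolding hom_def by auto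
  note GYd = assms(2)[unfolded good_yoneda_def]
  have GY: "\<forall>f\<in>adm. adm_obj C adm (src C f) \<longrightarrow>
       R f \<in> hom C (tgt C f) (PP (src C f)) \<and>
       chi f \<in> cells C (y (src C f)) (cmp C (R f) f) \<and>
       abs_left_lift C (y (src C f)) f (R f) (chi f)"
    using GYd by (elim conjE) assumption
  have GY2: "\<forall>f\<in>adm. adm_obj C adm (src C f) \<longrightarrow>
       (\<forall>g \<phi>. abs_left_lift C (y (src C f)) f g \<phi> \<longrightarrow>
          pointwise_left_ext C (y (src C f)) f g \<phi>)"
    using GYd by (elim conjE) assumption
  have ao: "adm_obj C adm (src C f)" using assms(3) fa(2) by simp
  have X: "R f \<in> hom C (tgt C f) (PP (src C f)) \<and>
       chi f \<in> cells C (y (src C f)) (cmp C (R f) f) \<and>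
       abs_left_lift C (y (src C f)) f (R f) (chi f)"
    using GY assms(5) ao by blast
  have Rf: "R f \<in> hom C B (PP A)" and chi: "chi f \<in> cells C (y A) (cmp C (R f) f)"
    and abs_chi: "abs_left_lift C (y A) f (R f) (chi f)"
    using X unfolding fa(2,3) by blast+
  have GY2': "\<And>g \<phi>. abs_left_lift C (y A) f g \<phi> \<Longrightarrow> pointwise_left_ext C (y A) f g \<phi>"
  proof -
    fix g \<phi> assume "abs_left_lift C (y A) f g \<phi>"
    moreover have "\<forall>g \<phi>. abs_left_lift C (y (src C f)) f g \<phi> \<longrightarrow> pointwise_left_ext C (y (src C f)) f g \<phi>"
      using GY2 assms(5) ao by blast
    ultimately show "pointwise_left_ext C (y A) f g \<phi>" unfolding fa(2) by blast
  qed
  have LR: "left_ext C (y A) f (R f) (chi f)"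
    using GY2'[OF abs_chi] unfolding pointwise_left_ext_def by blast
  have Ra: "R f \<in> arr C" using Rf unfolding hom_def by auto
  have bijg0: "\<forall>k\<in>hom C (src C g) (tgt C g).
       bij_betw (\<lambda>\<kappa>. vcmp C (wr C \<kappa> f) \<phi>) (cells C g k) (cells C (y A) (cmp C k f))"
    using assms(8) unfolding left_ext_def by blast
  have bijg: "\<And>k. k \<in> hom C B (PP A) \<Longrightarrow>
      bij_betw (\<lambda>\<kappa>. vcmp C (wr C \<kappa> f) \<phi>) (cells C g k) (cells C (y A) (cmp C k f))"
    using bijg0 unfolding ga(2,3) by blast
  have RR: "src C (R f) = B" "tgt C (R f) = PP A" using Rf unfolding hom_def by auto
  have bijR0: "\<forall>k\<in>hom C (src C (R f)) (tgt C (R f)).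
       bij_betw (\<lambda>\<kappa>. vcmp C (wr C \<kappa> f) (chi f)) (cells C (R f) k) (cells C (y A) (cmp C k f))"
    using LR unfolding left_ext_def by blast
  have bijR: "\<And>k. k \<in> hom C B (PP A) \<Longrightarrow>
      bij_betw (\<lambda>\<kappa>. vcmp C (wr C \<kappa> f) (chi f)) (cells C (R f) k) (cells C (y A) (cmp C k f))"
    using bijR0 unfolding RR by blast
  have "chi f \<in> (\<lambda>\<kappa>. vcmp C (wr C \<kappa> f) \<phi>) ` cells C g (R f)"
    using bijg[OF Rf] chi unfolding bij_betw_def by simp
  then obtain \<kappa> where k: "\<kappa> \<in> cells C g (R f)" and ke: "vcmp C (wr C \<kappa> f) \<phi> = chi f"
    by (elim imageE) simp
  have "\<phi> \<in> (\<lambda>\<kappa>. vcmp C (wr C \<kappa> f) (chi f)) ` cells C (R f) g"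
    using bijR[OF assms(6)] assms(7) unfolding bij_betw_def by simp
  then obtain \<kappa>' where k': "\<kappa>' \<in> cells C (R f) g" and ke': "vcmp C (wr C \<kappa>' f) (chi f) = \<phi>"
    by (elim imageE) simp
  have tj: "tgt C f = src C g" "tgt C f = src C (R f)" using fa ga Rf unfolding hom_def by auto
  have wk: "wr C \<kappa> f \<in> cells C (cmp C g f) (cmp C (R f) f)" using wr_cells[OF tc k fa(1) tj(1)] .
  have wk': "wr C \<kappa>' f \<in> cells C (cmp C (R f) f) (cmp C g f)" using wr_cells[OF tc k' fa(1) tj(2)] .
  have i1: "vcmp C \<kappa>' \<kappa> = id2 C g"
  proof -
    have c1: "vcmp C \<kappa>' \<kappa> \<in> cells C g g" using tc_vcmp[OF tc k k'] .
    have c2: "id2 C g \<in> cells C g g" using tc_id2[OF tc ga(1)] .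
    have "vcmp C (wr C (vcmp C \<kappa>' \<kappa>) f) \<phi> = vcmp C (vcmp C (wr C \<kappa>' f) (wr C \<kappa> f)) \<phi>"
      using wr_vcmp[OF tc k k' fa(1) tj(1)] by simp
    also have "\<dots> = \<phi>" using tc_vassoc[OF tc assms(7) wk wk'] ke ke' by simp
    also have "\<dots> = vcmp C (wr C (id2 C g) f) \<phi>"
      using wr_id2[OF tc ga(1) fa(1) tj(1)] tc_vid(2)[OF tc assms(7)] by simp
    finally show ?thesis using bijg[OF assms(6)] c1 c2 unfolding bij_betw_def inj_on_def by blast
  qed
  have i2: "vcmp C \<kappa> \<kappa>' = id2 C (R f)"
  proof -
    have c1: "vcmp C \<kappa> \<kappa>' \<in> cells C (R f) (R f)" using tc_vcmp[OF tc k' k] .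
    have c2: "id2 C (R f) \<in> cells C (R f) (R f)" using tc_id2[OF tc Ra] .
    have "vcmp C (wr C (vcmp C \<kappa> \<kappa>') f) (chi f) = vcmp C (vcmp C (wr C \<kappa> f) (wr C \<kappa>' f)) (chi f)"
      using wr_vcmp[OF tc k' k fa(1) tj(2)] by simp
    also have "\<dots> = chi f" using tc_vassoc[OF tc chi wk' wk] ke ke' by simp
    also have "\<dots> = vcmp C (wr C (id2 C (R f)) f) (chi f)"
      using wr_id2[OF tc Ra fa(1) tj(2)] tc_vid(2)[OF tc chi] by simp
    finally show ?thesis using bijR[OF Rf] c1 c2 unfolding bij_betw_def inj_on_def by blast
  qed
  have absphi: "abs_left_lift C (y A) f g \<phi>"
    using abs_transport[OF tc abs_chi k' k i2 i1] ke' by simp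
  show ?thesis using absphi GY2'[OF absphi] by blast
qed

end
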